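(* Fix $\vartheta\in\mathbb{C}$, let $r_1,r_2$ be the two roots (listed with multiplicity) of $\vartheta-(\mathtt{h}+1)^2$, let $\omega=3+\max(\mathrm{Re}\, r_1,\mathrm{Re}\, r_2)$ and $\mathbb{C}_\omega=\{z\in\mathbb{C}: \mathrm{Re}\,z\in[\omega,\omega+2)\}$. Let $u=c\prod_{t\in\mathbb{C}_\omega}(\mathtt{h}-t)^{\mathtt{m}(t)}$ with $c\in\mathbb{C}^\times$ and $\mathtt{m}:\mathbb{C}_\omega\to\mathbb{Z}$ of finite support. Then the module $L_u$ is finitely generated over $\mathbb{C}[\mathtt{h}]$ if and only if, for every $s\in\mathbb{C}_\omega$, we have $0\leq\mathtt{m}(s)\leq|\{j\in\{1,2\}: r_j\in s-2\mathbb{Z}_{>0}\}|$.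
   Context: $\mathfrak{g}=\mathfrak{sl}_2(\mathbb{C})$ with basis $\mathtt{e},\mathtt{f},\mathtt{h}$, $[\mathtt{h},\mathtt{e}]=2\mathtt{e}$, $[\mathtt{h},\mathtt{f}]=-2\mathtt{f}$, $[\mathtt{e},\mathtt{f}]=\mathtt{h}$; Casimir element $\mathtt{c}=(\mathtt{h}+1)^2+4\mathtt{f}\mathtt{e}$; $U_\vartheta=U(\mathfrak{g})/U(\mathfrak{g})(\mathtt{c}-\vartheta)$. Let $\Bbbk=\mathbb{C}(\mathtt{h})$, $\sigma$ the automorphism of $\Bbbk$ fixing $\mathbb{C}$ with $\sigma(\mathtt{h})=\mathtt{h}-2$, and $R=\Bbbk[x,x^{-1},\sigma]$ (skew Laurent polynomials: $xr=\sigma(r)x$ for $r\in\Bbbk$). The assignment $\mathtt{e}\mapsto x$, $\mathtt{f}\mapsto\frac{\vartheta-(\mathtt{h}+1)^2}{4}x^{-1}$, $\mathtt{h}\mapsto\mathtt{h}$ gives an injective algebra homomorphism $U_\vartheta\to R$. $N_u$ is $\Bbbk$ with the $R$-module structure where $\Bbbk$ acts by multiplication and $x\cdot b=\sigma(b)u$; as a $U_\vartheta$-module, $\mathtt{h}$ acts by multiplication, $\mathtt{e}\cdot b=\sigma(b)u$ and $\mathtt{f}\cdot b=\frac{\vartheta-(\mathtt{h}+1)^2}{4}\cdot\frac{\sigma^{-1}(b)}{\sigma^{-1}(u)}$. It is known that $N_u$, viewed as a $U_\vartheta$-module, has a unique simple submodule; this is denoted $L_u$; it is a $\mathbb{C}[\mathtt{h}]$-module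 via the action of $\mathtt{h}$. *)

theory Defs
  imports Complex_Main "HOL-Computational_Algebra.Polynomial" "HOL-Computational_Algebra.Fraction_Field"
begin

text \<open>The field k = C(h) is modelled as the fraction field of complex polynomials;
  the polynomial variable is h.\<close>

type_synonym ratfun = "complex poly fract"

definition hvar :: ratfun where "hvar = Fract [:0, 1:] 1"

definition cst :: "complex \<Rightarrow> ratfun" where "cst c = Fract [:c:] 1"

definition poly_fr :: "complex poly \<Rightarrow> ratfun" where "poly_fr p = Fract p 1"

lift_definition shift_fr :: "complex \<Rightarrow> ratfun \<Rightarrow> ratfun"
  is "\<lambda>a q. (pcompose (fst q) [:a, 1:], pcompose (snd q) [:a, 1:])"
proof -
  fix a :: complex and x y :: "complex poly \<times> complex poly"
  assume "fractrel x y"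
  then have h: "snd x \<noteq> 0" "snd y \<noteq> 0" "fst x * snd y = fst y * snd x" by auto
  have nz: "pcompose p [:a, 1:] \<noteq> 0" if "p \<noteq> 0" for p :: "complex poly"
    using that pcompose_eq_0[of p "[:a, 1:]"] by fastforce
  have "pcompose (fst x) [:a, 1:] * pcompose (snd y) [:a, 1:]
        = pcompose (fst y) [:a, 1:] * pcompose (snd x) [:a, 1:]"
    using h(3) by (metis pcompose_mult)
  then show "fractrel (pcompose (fst x) [:a, 1:], pcompose (snd x) [:a, 1:])
                      (pcompose (fst y) [:a, 1:], pcompose (snd y) [:a, 1:])"
    using h nz by simp
qed

definition sigma :: "ratfun \<Rightarrow> ratfun" where "sigma = shift_fr (-2)"
definition sigma_inv :: "ratfun \<Rightarrow> ratfun" where "sigma_inv = shift_fr 2"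

text \<open>The U_theta-action on N_u (underlying space k).\<close>
definition act_h :: "ratfun \<Rightarrow> ratfun" where "act_h b = hvar * b"
definition act_e :: "ratfun \<Rightarrow> ratfun \<Rightarrow> ratfun" where "act_e u b = sigma b * u"
definition act_f :: "complex \<Rightarrow> ratfun \<Rightarrow> ratfun \<Rightarrow> ratfun" where
  "act_f \<theta> u b = ((cst \<theta> - (hvar + 1)^2) / 4) * (sigma_inv b / sigma_inv u)"

text \<open>U_theta-submodules of N_u: C-subspaces of k stable under e, f, h
  (U_theta is generated by e, f, h as an algebra).\<close>
definition is_submod :: "complex \<Rightarrow> ratfun \<Rightarrow> ratfun set \<Rightarrow> bool" where
  "is_submod \<theta> u M \<longleftrightarrow>
     0 \<in> M \<and> (\<forall>a\<in>M. \<forall>b\<in>M. a + b \<in> M) \<and> (\<forall>c. \<forall>a\<in>M. cst c * a \<in> M)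
     \<and> (\<forall>a\<in>M. act_h a \<in> M) \<and> (\<forall>a\<in>M. act_e u a \<in> M) \<and> (\<forall>a\<in>M. act_f \<theta> u a \<in> M)"

definition is_simple_submod :: "complex \<Rightarrow> ratfun \<Rightarrow> ratfun set \<Rightarrow> bool" where
  "is_simple_submod \<theta> u M \<longleftrightarrow> is_submod \<theta> u M \<and> M \<noteq> {0} \<and>
     (\<forall>M'. is_submod \<theta> u M' \<and> M' \<subseteq> M \<longrightarrow> M' = {0} \<or> M' = M)"

text \<open>L_u: the unique simple U_theta-submodule of N_u.\<close>
definition L_mod :: "complex \<Rightarrow> ratfun \<Rightarrow> ratfun set" where
  "L_mod \<theta> u = (THE M. is_simple_submod \<theta> u M)"

definition fin_gen_Ch :: "ratfun set \<Rightarrow> bool" where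
  "fin_gen_Ch M \<longleftrightarrow> (\<exists>S. finite S \<and> S \<subseteq> M \<and>
      M = {\<Sum>s\<in>S. poly_fr (p s) * s | p. True})"

end

theory Submission
  imports Defs "HOL-Computational_Algebra.Fundamental_Theorem_Algebra"
begin

lift_definition val :: "complex \<Rightarrow> ratfun \<Rightarrow> int"
  is "\<lambda>t q. if fst q = 0 then 0 else int (order t (fst q)) - int (order t (snd q))"
proof -
  fix t :: complex and x y :: "complex poly \<times> complex poly"
  assume "fractrel x y"
  then have h: "snd x \<noteq> 0" "snd y \<noteq> 0" "fst x * snd y = fst y * snd x" by auto
  show "(if fst x = 0 then 0 else int (order t (fst x)) - int (order t (snd x))) =
        (if fst y = 0 then 0 else int (order t (fst y)) - int (order t (snd y)))"
  proof (cases "fst x = 0")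
    case True
    then have "fst y = 0" using h by auto
    then show ?thesis using True by simp
  next
    case False
    then have F2: "fst y \<noteq> 0" using h by (metis mult_eq_0_iff)
    have "order t (fst x * snd y) = order t (fst y * snd x)" using h by simp
    moreover have "order t (fst x * snd y) = order t (fst x) + order t (snd y)"
      using h(2) False by (intro order_mult) (simp only: mult_eq_0_iff de_Morgan_disj, simp)
    moreover have "order t (fst y * snd x) = order t (fst y) + order t (snd x)"
      using h(1) F2 by (intro order_mult) (simp only: mult_eq_0_iff de_Morgan_disj, simp)
    ultimately have "order t (fst x) + order t (snd y) = order t (fst y) + order t (snd x)"
      by simp
    then show ?thesis using False F2 by simp
  qed
qed

lemma val_Fract: "a \<noteq> 0 \<Longrightarrow> b \<noteq> 0 \<Longrightarrow> val t (Fract a b) = int (order t a) - int (order t b)"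
  by transfer simp

lemma Fract_nz: "b \<noteq> 0 \<Longrightarrow> Fract a b \<noteq> 0 \<longleftrightarrow> a \<noteq> 0"
  by (simp add: Zero_fract_def eq_fract)

lemma val_zero[simp]: "val t 0 = 0"
  by transfer simp

lemma val_one[simp]: "val t 1 = 0"
  by (simp add: One_fract_def val_Fract)

lemma val_mult:
  assumes "x \<noteq> 0" "y \<noteq> 0" shows "val t (x * y) = val t x + val t y"
proof -
  obtain a b where x: "x = Fract a b" "b \<noteq> 0" "a \<noteq> 0" using assms(1) by (cases x rule: Fract_cases_nonzero) auto
  obtain c d where y: "y = Fract c d" "d \<noteq> 0" "c \<noteq> 0" using assms(2) by (cases y rule: Fract_cases_nonzero) auto
  show ?thesis using x y by (simp add: val_Fract order_mult)
qed

lemma val_inverse: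
  assumes "x \<noteq> 0" shows "val t (inverse x) = - val t x"
proof -
  obtain a b where x: "x = Fract a b" "b \<noteq> 0" "a \<noteq> 0" using assms(1) by (cases x rule: Fract_cases_nonzero) auto
  show ?thesis using x by (simp add: val_Fract)
qed

lemma val_divide:
  assumes "x \<noteq> 0" "y \<noteq> 0" shows "val t (x / y) = val t x - val t y"
  using assms by (simp add: divide_inverse val_mult val_inverse)

lemma val_add:
  assumes "x \<noteq> 0" "y \<noteq> 0" "x + y \<noteq> 0" shows "min (val t x) (val t y) \<le> val t (x + y)"
proof -
  obtain a b where x: "x = Fract a b" "b \<noteq> 0" "a \<noteq> 0" using assms(1) by (cases x rule: Fract_cases_nonzero) auto
  obtain c d where y: "y = Fract c d" "d \<noteq> 0" "c \<noteq> 0" using assms(2) by (cases y rule: Fract_cases_nonzero) auto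
  have s: "x + y = Fract (a * d + c * b) (b * d)" using x y by simp
  have nz: "a * d + c * b \<noteq> 0" using assms(3) s x y by (auto simp: Fract_nz)
  define k where "k = min (order t a + order t d) (order t c + order t b)"
  have "[:-t,1:]^k dvd a * d"
    unfolding k_def using x y by (simp add: order_divides order_mult)
  moreover have "[:-t,1:]^k dvd c * b"
    unfolding k_def using x y by (simp add: order_divides order_mult)
  ultimately have "[:-t,1:]^k dvd a * d + c * b" by simp
  then have "k \<le> order t (a * d + c * b)" using nz by (simp add: order_divides)
  then show ?thesis using x y s nz unfolding k_def by (simp add: val_Fract order_mult)
qed

lemma val_power: "x \<noteq> 0 \<Longrightarrow> val t (x ^ n) = int n * val t x"
  by (induction n) (simp_all add: val_mult algebra_simps)

lemma val_powi: "x \<noteq> 0 \<Longrightarrow> val t (x powi n) = n * val t x"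
  by (simp add: power_int_def val_power val_inverse)

lemma val_prod:
  assumes "finite S" "\<And>s. s \<in> S \<Longrightarrow> f s \<noteq> 0"
  shows "val t (prod f S) = (\<Sum>s\<in>S. val t (f s))"
  using assms by (induction S rule: finite_induct) (simp_all add: val_mult)

lemma poly_fr_add: "poly_fr (p + q) = poly_fr p + poly_fr q"
  by (simp add: poly_fr_def)
lemma poly_fr_mult: "poly_fr (p * q) = poly_fr p * poly_fr q"
  by (simp add: poly_fr_def)
lemma poly_fr_1[simp]: "poly_fr 1 = 1"
  by (simp add: poly_fr_def One_fract_def)
lemma poly_fr_0[simp]: "poly_fr 0 = 0"
  by (simp add: poly_fr_def Zero_fract_def)
lemma poly_fr_eq_0[simp]: "poly_fr p = 0 \<longleftrightarrow> p = 0"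
  by (simp add: poly_fr_def Zero_fract_def eq_fract)
lemma poly_fr_minus: "poly_fr (- p) = - poly_fr p"
  by (simp add: poly_fr_def)
lemma poly_fr_diff: "poly_fr (p - q) = poly_fr p - poly_fr q"
  by (simp add: poly_fr_def)
lemma poly_fr_power: "poly_fr (p ^ n) = poly_fr p ^ n"
  by (induction n) (simp_all add: poly_fr_mult)
lemma poly_fr_sum: "poly_fr (sum f S) = (\<Sum>s\<in>S. poly_fr (f s))"
  by (induction S rule: infinite_finite_induct) (simp_all add: poly_fr_add)
lemma cst_poly: "cst c = poly_fr [:c:]"
  by (simp add: poly_fr_def cst_def)
lemma hvar_poly: "hvar = poly_fr [:0, 1:]"
  by (simp add: poly_fr_def hvar_def)
lemma hvar_minus_cst: "hvar - cst s = poly_fr [:-s, 1:]"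
  by (simp add: hvar_poly cst_poly flip: poly_fr_diff)
lemma cst_eq_0[simp]: "cst c = 0 \<longleftrightarrow> c = 0"
  by (simp add: cst_poly)
lemma cst_zero[simp]: "cst 0 = 0"
  by (simp add: cst_def Zero_fract_def)
lemma cst_mult: "cst a * cst b = cst (a * b)"
  by (simp add: cst_def mult.commute)

lemma val_poly_fr: "p \<noteq> 0 \<Longrightarrow> val t (poly_fr p) = int (order t p)"
  by (simp add: poly_fr_def val_Fract)

lemma val_cst: "c \<noteq> 0 \<Longrightarrow> val t (cst c) = 0"
  by (simp add: cst_poly val_poly_fr order_0I)

lemma val_lin: "val t (hvar - cst s) = (if t = s then 1 else 0)"
proof -
  have "order s [:-s, 1:] = 1" using order_power_n_n[of s 1] by simp
  moreover have "t \<noteq> s \<Longrightarrow> order t [:-s, 1:] = 0" by (intro order_0I) simp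
  ultimately show ?thesis by (simp add: hvar_minus_cst val_poly_fr)
qed

lemma hvar_minus_cst_nz: "hvar - cst s \<noteq> 0"
  by (simp add: hvar_minus_cst)

lemma finite_val: "finite {t. val t x \<noteq> 0}"
proof (cases x rule: Fract_cases_nonzero)
  case (Fract a b)
  have "{t. val t x \<noteq> 0} \<subseteq> {t. poly a t = 0} \<union> {t. poly b t = 0}"
  proof
    fix t assume "t \<in> {t. val t x \<noteq> 0}"
    then have "order t a \<noteq> 0 \<or> order t b \<noteq> 0" using Fract by (auto simp: val_Fract)
    then show "t \<in> {t. poly a t = 0} \<union> {t. poly b t = 0}" using Fract by (auto simp: order_root)
  qed
  moreover have "finite ({t. poly a t = 0} \<union> {t. poly b t = 0})"
    using Fract poly_roots_finite[of a] poly_roots_finite[of b] by blast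
  ultimately show ?thesis by (rule finite_subset)
next
  case 0
  then show ?thesis by simp
qed

lemma pcompose_power_left': "pcompose (p ^ n) q = (pcompose p q) ^ n"
  by (induction n) (simp_all add: pcompose_mult pcompose_1)

lemma pcompose_lin_inv: "pcompose [:a, 1:] [:-a, 1:] = [:0, 1::complex:]"
  by (simp add: pcompose_pCons)

lemma order_pcompose_lin:
  fixes p :: "complex poly"
  assumes "p \<noteq> 0"
  shows "order t (pcompose p [:a, 1:]) = order (t + a) p"
proof -
  have inv1: "pcompose (pcompose q [:a, 1:]) [:-a, 1:] = q" for q :: "complex poly"
    by (simp only: pcompose_assoc[symmetric] pcompose_lin_inv pcompose_idR)
  have lin: "pcompose [:-(t+a), 1:] [:a, 1:] = [:-t, 1:]"
    by (simp add: pcompose_pCons)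
  have lin2: "pcompose [:-t, 1:] [:-a, 1:] = [:-(t+a), 1:]"
    by (simp add: pcompose_pCons)
  have nz: "pcompose p [:a, 1:] \<noteq> 0" using assms pcompose_eq_0[of p "[:a, 1:]"] by fastforce
  have iff: "[:-t, 1:]^n dvd pcompose p [:a, 1:] \<longleftrightarrow> [:-(t+a), 1:]^n dvd p" for n
  proof
    assume "[:-t, 1:]^n dvd pcompose p [:a, 1:]"
    then obtain k where k: "pcompose p [:a, 1:] = [:-t, 1:]^n * k" by (auto simp: dvd_def)
    have "p = pcompose ([:-t, 1:]^n * k) [:-a, 1:]" using k inv1[of p] by simp
    also have "\<dots> = [:-(t+a), 1:]^n * pcompose k [:-a, 1:]"
      by (simp add: pcompose_mult pcompose_power_left' pcompose_pCons)
    finally show "[:-(t+a), 1:]^n dvd p" by simp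
  next
    assume "[:-(t+a), 1:]^n dvd p"
    then obtain k where k: "p = [:-(t+a), 1:]^n * k" by (auto simp: dvd_def)
    have "pcompose p [:a, 1:] = [:-t, 1:]^n * pcompose k [:a, 1:]"
      by (simp add: k pcompose_mult pcompose_power_left' pcompose_pCons)
    then show "[:-t, 1:]^n dvd pcompose p [:a, 1:]" by simp
  qed
  have "n \<le> order t (pcompose p [:a, 1:]) \<longleftrightarrow> n \<le> order (t + a) p" for n
    using iff[of n] nz assms order_divides[of "t+a" n p] order_divides[of t n "pcompose p [:a,1:]"]
    by simp
  then show ?thesis by (meson le_antisym order_refl)
qed

lemma shift_Fract: "q \<noteq> 0 \<Longrightarrow>
   shift_fr a (Fract p q) = Fract (pcompose p [:a, 1:]) (pcompose q [:a, 1:])"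
proof -
  assume q: "q \<noteq> 0"
  have nz: "pcompose q [:a, 1:] \<noteq> 0" using q pcompose_eq_0[of q "[:a, 1:]"] by fastforce
  have r: "fractrel (p, q) (p, q)" using q by simp
  show ?thesis using q nz shift_fr.abs_eq[OF r, of a] by (simp add: Fract.abs_eq)
qed

lemma shift_fr_zero[simp]: "shift_fr a 0 = 0"
  by (simp add: Zero_fract_def shift_Fract pcompose_1 eq_fract)

lemma shift_nz: "x \<noteq> 0 \<Longrightarrow> shift_fr a x \<noteq> 0"
proof (cases x rule: Fract_cases_nonzero)
  case (Fract p q)
  have nz: "pcompose q [:a, 1:] \<noteq> 0" "pcompose p [:a, 1:] \<noteq> 0"
    using Fract pcompose_eq_0[of q "[:a, 1:]"] pcompose_eq_0[of p "[:a, 1:]"] by fastforce+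
  then show ?thesis using Fract by (simp add: shift_Fract Fract_nz)
qed simp

lemma val_shift: "x \<noteq> 0 \<Longrightarrow> val t (shift_fr a x) = val (t + a) x"
proof (cases x rule: Fract_cases_nonzero)
  case (Fract p q)
  have nz: "pcompose q [:a, 1:] \<noteq> 0" "pcompose p [:a, 1:] \<noteq> 0"
    using Fract pcompose_eq_0[of q "[:a, 1:]"] pcompose_eq_0[of p "[:a, 1:]"] by fastforce+
  then show ?thesis using Fract by (simp add: shift_Fract val_Fract order_pcompose_lin)
qed simp

lemma ideal_one:
  fixes I :: "complex poly set"
  assumes add: "\<And>p q. p \<in> I \<Longrightarrow> q \<in> I \<Longrightarrow> p + q \<in> I"
    and mul: "\<And>p q. p \<in> I \<Longrightarrow> q * p \<in> I"
    and loc: "\<And>t. \<exists>p\<in>I. poly p t \<noteq> 0"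
  shows "1 \<in> I"
proof -
  obtain p1 where p1: "p1 \<in> I" "poly p1 0 \<noteq> 0" using loc by blast
  then have "p1 \<noteq> 0" by auto
  define P where "P n \<longleftrightarrow> (\<exists>p\<in>I. p \<noteq> 0 \<and> degree p = n)" for n
  have "P (degree p1)" using p1 \<open>p1 \<noteq> 0\<close> by (auto simp: P_def)
  define d where "d = (LEAST n. P n)"
  have "P d" unfolding d_def by (rule LeastI) fact
  then obtain p0 where p0: "p0 \<in> I" "p0 \<noteq> 0" "degree p0 = d" by (auto simp: P_def)
  have dv: "p0 dvd p" if "p \<in> I" for p
  proof (rule ccontr)
    assume nd: "\<not> p0 dvd p"
    then have r: "p mod p0 \<noteq> 0" by (simp add: mod_eq_0_iff_dvd)
    have "p mod p0 = p + (- (p div p0)) * p0"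
      using div_mult_mod_eq[of p p0] by (metis add_diff_cancel_left' diff_conv_add_uminus mult_minus_left)
    then have "p mod p0 \<in> I" using add mul that p0 by metis
    then have "P (degree (p mod p0))" using r by (auto simp: P_def)
    then have "d \<le> degree (p mod p0)" unfolding d_def by (rule Least_le)
    moreover have "degree (p mod p0) < degree p0" using degree_mod_less'[OF p0(2) r] .
    ultimately show False using p0 by simp
  qed
  show ?thesis
  proof (cases "degree p0 = 0")
    case True
    then obtain c where c: "p0 = [:c:]" by (metis degree_eq_zeroE)
    then have "c \<noteq> 0" using p0 by auto
    have "[:1/c:] * p0 \<in> I" using mul p0 by blast
    moreover have "[:1/c:] * p0 = 1" using c \<open>c \<noteq> 0\<close> by (simp add: one_pCons)
    ultimately show ?thesis by simp
  next
    case False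
    then have "\<not> constant (poly p0)" by (simp add: constant_degree)
    then obtain z where z: "poly p0 z = 0" using fundamental_theorem_of_algebra by blast
    obtain p where p: "p \<in> I" "poly p z \<noteq> 0" using loc by blast
    from dv[OF p(1)] obtain k where "p = p0 * k" by (auto simp: dvd_def)
    then have "poly p z = 0" using z by simp
    then show ?thesis using p by simp
  qed
qed

lemma local_step:
  assumes x: "x \<noteq> 0" and y: "y \<noteq> 0" and le: "val t y \<le> val t x"
  shows "\<exists>p c. poly_fr p * x = poly_fr c * y \<and> poly p t \<noteq> 0"
proof -
  define z where "z = y / x"
  have zx: "y = z * x" using x by (simp add: z_def)
  have "z \<noteq> 0" using x y by (simp add: z_def)
  then obtain a c where ac: "z = Fract a c" "c \<noteq> 0" "a \<noteq> 0"
    by (cases z rule: Fract_cases_nonzero) auto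
  have "val t z \<le> 0" using le x y by (simp add: z_def val_divide)
  then have ole: "order t a \<le> order t c" using ac by (simp add: val_Fract)
  define k where "k = order t a"
  obtain a' where a': "a = [:-t, 1:] ^ k * a'" "\<not> [:-t, 1:] dvd a'"
    using order_decomp[OF ac(3)] unfolding k_def by blast
  have "[:-t, 1:] ^ k dvd c" using ole ac by (simp add: order_divides k_def)
  then obtain c' where c': "c = [:-t, 1:] ^ k * c'" by (auto simp: dvd_def)
  have pa: "poly a' t \<noteq> 0" using a'(2) by (simp add: poly_eq_0_iff_dvd)
  have eq: "c' * a = c * a'" by (simp add: a'(1) c' algebra_simps)
  have "poly_fr c' * y = Fract (c' * a) c * x"
    by (simp add: zx ac poly_fr_def mult.assoc)
  also have "Fract (c' * a) c = Fract (c * a') c"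
    using eq by simp
  also have "\<dots> = Fract a' 1" using ac(2) mult_fract_cancel[of c a' 1] by simp
  finally have "poly_fr a' * x = poly_fr c' * y" by (simp add: poly_fr_def)
  then show ?thesis using pa by blast
qed

lemma poly_crit:
  assumes x: "x \<noteq> 0" and nn: "\<And>t. val t x \<ge> 0"
  shows "\<exists>q. x = poly_fr q"
proof -
  define I where "I = {p. \<exists>q. poly_fr p * x = poly_fr q}"
  have "1 \<in> I"
  proof (rule ideal_one)
    fix p q assume "p \<in> I" "q \<in> I"
    then obtain a b where "poly_fr p * x = poly_fr a" "poly_fr q * x = poly_fr b" by (auto simp: I_def)
    then have "poly_fr (p + q) * x = poly_fr (a + b)" by (simp add: poly_fr_add algebra_simps)
    then show "p + q \<in> I" by (auto simp: I_def)
  next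
    fix p q assume "p \<in> I"
    then obtain a where "poly_fr p * x = poly_fr a" by (auto simp: I_def)
    then have "poly_fr (q * p) * x = poly_fr (q * a)" by (simp add: poly_fr_mult mult.assoc)
    then show "q * p \<in> I" by (auto simp: I_def)
  next
    fix t
    have "val t 1 \<le> val t x" using nn by simp
    from local_step[OF x _ this] obtain p c where "poly_fr p * x = poly_fr c * 1" "poly p t \<noteq> 0"
      by auto
    then show "\<exists>p\<in>I. poly p t \<noteq> 0" by (auto simp: I_def)
  qed
  then show ?thesis by (auto simp: I_def)
qed


lemma val_four: "val t (4::ratfun) = 0"
proof -
  have e: "(4::ratfun) = Fract 4 1" using of_nat_fract[of 4] by simp
  have o: "order t (4 :: complex poly) = 0" by (intro order_0I) simp
  have "val t (Fract (4::complex poly) 1) = 0"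
    using o by (subst val_Fract) simp_all
  then show ?thesis by (subst e)
qed

lemma four_nz: "(4::ratfun) \<noteq> 0"
proof -
  have e: "(4::ratfun) = Fract 4 1" using of_nat_fract[of 4] by simp
  show ?thesis by (subst e) (simp add: Fract_nz)
qed

lemma card12: "card {j \<in> {1::nat, 2}. P j} = (if P 1 then 1 else 0) + (if P 2 then 1 else 0)"
proof -
  have "{j \<in> {1::nat, 2}. P j} = (if P 1 then {1} else {}) \<union> (if P 2 then {2} else {})" by auto
  then show ?thesis by simp
qed

lemma val_uminus: "val t (- x) = val t x"
proof (cases x rule: Fract_cases_nonzero)
  case (Fract a b)
  then show ?thesis by (simp add: val_Fract)
qed simp

lemma sum_if_split:
  assumes "\<And>s. s \<in> S \<Longrightarrow> (P s \<longleftrightarrow> Q1 s \<or> Q2 s) \<and> \<not> (Q1 s \<and> Q2 s)"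
  shows "(\<Sum>s\<in>S. if P s then f s else 0) =
         (\<Sum>s\<in>S. if Q1 s then f s else 0) + (\<Sum>s\<in>S. if Q2 s then f s else 0)"
  unfolding sum.distrib[symmetric] by (rule sum.cong) (use assms in auto)

lemma nat_avoid: "finite (X :: nat set) \<Longrightarrow> \<exists>n. n \<notin> X"
  using ex_new_if_finite[OF infinite_UNIV_nat] by blast

lemma submod_poly:
  assumes "is_submod th u M" "a \<in> M"
  shows "poly_fr p * a \<in> M"
proof (induction p)
  case 0
  then show ?case using assms by (simp add: is_submod_def)
next
  case (pCons c p)
  have e: "pCons c p = [:c:] + [:0, 1:] * p" by simp
  have "poly_fr (pCons c p) = cst c + hvar * poly_fr p"
    by (subst e) (simp only: poly_fr_add poly_fr_mult cst_poly hvar_poly)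
  then have "poly_fr (pCons c p) * a = cst c * a + act_h (poly_fr p * a)"
    by (simp add: act_h_def algebra_simps)
  then show ?case using assms pCons.IH by (simp add: is_submod_def)
qed

locale csetup =
  fixes th r1 r2 c :: complex and m :: "complex \<Rightarrow> int" and om :: real and Cw :: "complex set"
  assumes roots: "\<And>z. th - (z + 1)^2 = - ((z - r1) * (z - r2))"
    and om_def: "om = 3 + max (Re r1) (Re r2)"
    and Cw_def: "Cw = {z. om \<le> Re z \<and> Re z < om + 2}"
    and c_nz: "c \<noteq> 0"
    and m_fin: "finite {t. m t \<noteq> 0}"
    and m_supp: "{t. m t \<noteq> 0} \<subseteq> Cw"
begin

definition "S = {t. m t \<noteq> 0}"
definition "u = cst c * (\<Prod>t\<in>S. (hvar - cst t) powi m t)"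
definition "gam t = (if r1 = t then 1 else 0) + (if r2 = t then (1::int) else 0)"
definition "A t = (\<Sum>s\<in>S. if \<exists>i::nat. s = t - 2 * of_nat i then m s else 0)"
definition "B t = (\<Sum>s\<in>S. if \<exists>i::nat. s = t + 2 + 2 * of_nat i then m s else 0)"
definition "G t = (if \<exists>i::nat. r1 = t + 2 * of_nat i then 1 else 0)
               + (if \<exists>i::nat. r2 = t + 2 * of_nat i then (1::int) else 0)"
definition "N t = min (A t) (G t - B t)"
definition "L0 = {x. x = 0 \<or> (\<forall>t. N t \<le> val t x)}"

lemma finS: "finite S" using m_fin by (simp add: S_def)
lemma S_Cw: "s \<in> S \<Longrightarrow> om \<le> Re s \<and> Re s < om + 2"
  using m_supp Cw_def by (auto simp: S_def)
lemma notS: "t \<notin> S \<Longrightarrow> m t = 0" by (simp add: S_def)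
lemma r_Re: "Re r1 \<le> om - 3" "Re r2 \<le> om - 3" using om_def by auto

lemma geo:
  assumes "s \<in> Cw" "s' \<in> Cw" "s + 2 * of_nat a = s' + 2 * of_nat b"
  shows "s = s'"
proof -
  have "Re s + 2 * a = Re s' + 2 * b" using arg_cong[OF assms(3), of Re] by simp
  moreover have "om \<le> Re s" "Re s < om + 2" "om \<le> Re s'" "Re s' < om + 2" using assms Cw_def by auto
  ultimately have "a = b" by linarith
  then show ?thesis using assms(3) by simp
qed

lemma u_nz: "u \<noteq> 0"
  unfolding u_def using c_nz finS hvar_minus_cst_nz by (simp add: power_int_eq_0_iff)

lemma val_u: "val t u = m t"
proof -
  have "val t u = (\<Sum>s\<in>S. m s * (if t = s then 1 else 0))"
    unfolding u_def using c_nz finS hvar_minus_cst_nz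
    by (simp add: val_mult val_cst val_prod val_powi val_lin power_int_eq_0_iff)
  also have "\<dots> = (\<Sum>s\<in>S. if s = t then m s else 0)" by (rule sum.cong) auto
  also have "\<dots> = m t" using finS notS by (simp add: sum.delta)
  finally show ?thesis .
qed

definition "gfr = (cst th - (hvar + 1)^2) / 4"

lemma gfr_eq: "gfr = - ((hvar - cst r1) * (hvar - cst r2)) / 4"
proof -
  have "[:th:] - [:1, 1:]^2 = - ([:-r1, 1:] * [:-r2, 1:])"
  proof (rule poly_eq_poly_eq_iff[THEN iffD1], rule ext)
    fix z
    show "poly ([:th:] - [:1, 1:]^2) z = poly (- ([:-r1, 1:] * [:-r2, 1:])) z"
      using roots[of z] by (simp add: algebra_simps power2_eq_square)
  qed
  then have e: "poly_fr ([:th:] - [:1, 1:]^2) = poly_fr (- ([:-r1, 1:] * [:-r2, 1:]))" by simp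
  have h1: "poly_fr [:1, 1:] = hvar + 1"
  proof -
    have "[:1, 1:] = [:0, 1:] + (1::complex poly)" by (simp add: one_pCons)
    then show ?thesis by (simp add: hvar_poly poly_fr_add)
  qed
  have "poly_fr ([:th:] - [:1, 1:]^2) = cst th - (hvar + 1)^2"
    by (simp only: poly_fr_diff poly_fr_power h1 cst_poly)
  moreover have "poly_fr (- ([:-r1, 1:] * [:-r2, 1:])) = - ((hvar - cst r1) * (hvar - cst r2))"
    by (simp only: poly_fr_minus poly_fr_mult hvar_minus_cst)
  ultimately show ?thesis unfolding gfr_def using e by simp
qed

lemma prod_nz: "(hvar - cst r1) * (hvar - cst r2) \<noteq> 0"
  using hvar_minus_cst_nz[of r1] hvar_minus_cst_nz[of r2] by (simp only: mult_eq_0_iff) simp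

lemma gfr_nz: "gfr \<noteq> 0"
  unfolding gfr_eq using prod_nz four_nz by simp

lemma val_gfr: "val t gfr = gam t"
proof -
  have "val t gfr = val t ((hvar - cst r1) * (hvar - cst r2))"
    unfolding gfr_eq using prod_nz four_nz by (simp add: val_divide val_four val_uminus)
  also have "\<dots> = gam t"
    using val_mult[OF hvar_minus_cst_nz hvar_minus_cst_nz]
    by (simp add: val_lin gam_def eq_commute)
  finally show ?thesis .
qed

lemma act_f_eq: "act_f th u b = gfr * (sigma_inv b / sigma_inv u)"
  by (simp add: act_f_def gfr_def)

lemma act_e_nz: "b \<noteq> 0 \<Longrightarrow> act_e u b \<noteq> 0"
  by (simp add: act_e_def sigma_def shift_nz u_nz)

lemma val_act_e: "b \<noteq> 0 \<Longrightarrow> val t (act_e u b) = val (t - 2) b + m t"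
  by (simp add: act_e_def sigma_def shift_nz u_nz val_mult val_shift val_u)

lemma act_f_nz: "b \<noteq> 0 \<Longrightarrow> act_f th u b \<noteq> 0"
  by (simp add: act_f_eq sigma_inv_def shift_nz u_nz gfr_nz)

lemma val_act_f: "b \<noteq> 0 \<Longrightarrow> val t (act_f th u b) = gam t + val (t + 2) b - m (t + 2)"
  by (simp add: act_f_eq sigma_inv_def shift_nz u_nz gfr_nz val_mult val_divide val_shift val_u val_gfr)

end


lemma ex_step: "(\<exists>i::nat. y = x + 2 * of_nat i) \<longleftrightarrow> (y = x \<or> (\<exists>i::nat. y = x + 2 + 2 * of_nat i))"
  for x y :: complex
proof
  assume "\<exists>i::nat. y = x + 2 * of_nat i"
  then obtain i :: nat where i: "y = x + 2 * of_nat i" by blast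
  show "y = x \<or> (\<exists>i::nat. y = x + 2 + 2 * of_nat i)"
  proof (cases i)
    case 0 then show ?thesis using i by simp
  next
    case (Suc j) then show ?thesis using i by (intro disjI2 exI[of _ j]) (simp add: algebra_simps)
  qed
next
  assume "y = x \<or> (\<exists>i::nat. y = x + 2 + 2 * of_nat i)"
  then show "\<exists>i::nat. y = x + 2 * of_nat i"
  proof
    assume "y = x" then show ?thesis by (intro exI[of _ 0]) simp
  next
    assume "\<exists>i::nat. y = x + 2 + 2 * of_nat i"
    then obtain i :: nat where "y = x + 2 + 2 * of_nat i" by blast
    then show ?thesis by (intro exI[of _ "Suc i"]) (simp add: algebra_simps)
  qed
qed

lemma ex_step_disj: "\<not> (y = x \<and> (\<exists>i::nat. y = x + 2 + 2 * of_nat i))" for x y :: complex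
proof
  assume "y = x \<and> (\<exists>i::nat. y = x + 2 + 2 * of_nat i)"
  then obtain i :: nat where e: "x = x + 2 + 2 * of_nat i" by blast
  have r: "Re (x + 2 + 2 * of_nat i) = Re x + 2 + 2 * real i" by simp
  have "Re x = Re (x + 2 + 2 * of_nat i)" using e by (rule arg_cong)
  with r show False by linarith
qed

lemma nat_le_ceil: "real n \<le> x \<Longrightarrow> n \<le> nat \<lceil>x\<rceil>"
  by (metis ceiling_mono ceiling_of_nat nat_int nat_mono)

lemma fin_up: "finite {n::nat. Re t + 2 * real n < C}"
proof -
  have "{n::nat. Re t + 2 * real n < C} \<subseteq> {..nat \<lceil>C - Re t\<rceil>}"
    by (auto intro!: nat_le_ceil)
  then show ?thesis using finite_subset by blast
qed

lemma fin_down: "finite {n::nat. C \<le> Re t - 2 * real n}"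
proof -
  have "{n::nat. C \<le> Re t - 2 * real n} \<subseteq> {..nat \<lceil>Re t - C\<rceil>}"
    by (auto intro!: nat_le_ceil)
  then show ?thesis using finite_subset by blast
qed

context csetup
begin

lemma A_rec: "A t = m t + A (t - 2)"
proof -
  have "A t = (\<Sum>s\<in>S. if s = t then m s else 0) + A (t - 2)"
    unfolding A_def
  proof (rule sum_if_split)
    fix s
    have "(\<exists>i::nat. s = t - 2 * of_nat i) \<longleftrightarrow> s = t \<or> (\<exists>i::nat. s = t - 2 - 2 * of_nat i)"
    proof
      assume "\<exists>i::nat. s = t - 2 * of_nat i"
      then obtain i :: nat where i: "s = t - 2 * of_nat i" by blast
      show "s = t \<or> (\<exists>i::nat. s = t - 2 - 2 * of_nat i)"
      proof (cases i)
        case 0 then show ?thesis using i by simp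
      next
        case (Suc j) then show ?thesis using i by (intro disjI2 exI[of _ j]) (simp add: algebra_simps)
      qed
    next
      assume "s = t \<or> (\<exists>i::nat. s = t - 2 - 2 * of_nat i)"
      then show "\<exists>i::nat. s = t - 2 * of_nat i"
      proof
        assume "s = t" then show ?thesis by (intro exI[of _ 0]) simp
      next
        assume "\<exists>i::nat. s = t - 2 - 2 * of_nat i"
        then obtain i :: nat where "s = t - 2 - 2 * of_nat i" by blast
        then show ?thesis by (intro exI[of _ "Suc i"]) (simp add: algebra_simps)
      qed
    qed
    moreover have "\<not> (s = t \<and> (\<exists>i::nat. s = t - 2 - 2 * of_nat i))"
    proof
      assume "s = t \<and> (\<exists>i::nat. s = t - 2 - 2 * of_nat i)"
      then obtain i :: nat where "t = t - 2 - 2 * of_nat i" by blast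
      then have "Re t = Re (t - 2 - 2 * of_nat i)" by simp
      then show False by simp
    qed
    ultimately show "((\<exists>i::nat. s = t - 2 * of_nat i) \<longleftrightarrow> s = t \<or> (\<exists>i::nat. s = t - 2 - 2 * of_nat i))
       \<and> \<not> (s = t \<and> (\<exists>i::nat. s = t - 2 - 2 * of_nat i))" by blast
  qed
  also have "(\<Sum>s\<in>S. if s = t then m s else 0) = m t" using finS notS by (simp add: sum.delta)
  finally show ?thesis .
qed

lemma B_rec: "B t = m (t + 2) + B (t + 2)"
proof -
  have "B t = (\<Sum>s\<in>S. if s = t + 2 then m s else 0) + B (t + 2)"
    unfolding B_def by (rule sum_if_split) (use ex_step ex_step_disj in blast)
  also have "(\<Sum>s\<in>S. if s = t + 2 then m s else 0) = m (t + 2)" using finS notS by (simp add: sum.delta)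
  finally show ?thesis .
qed

lemma G_rec: "G t = gam t + G (t + 2)"
proof -
  have e: "(if \<exists>i::nat. r = t + 2 * of_nat i then 1 else 0) =
        (if r = t then 1 else 0) + (if \<exists>i::nat. r = t + 2 + 2 * of_nat i then (1::int) else 0)" for r
    using ex_step[of r t] ex_step_disj[of r t] by auto
  show ?thesis unfolding G_def gam_def using e[of r1] e[of r2] by simp
qed

lemma A_van: "Re t < om \<Longrightarrow> A t = 0"
  unfolding A_def
proof (rule sum.neutral, rule ballI)
  fix s assume "Re t < om" "s \<in> S"
  then have "\<not> (\<exists>i::nat. s = t - 2 * of_nat i)" using S_Cw[of s] by auto
  then show "(if \<exists>i::nat. s = t - 2 * of_nat i then m s else 0) = 0" by simp
qed

lemma B_van: "om \<le> Re t \<Longrightarrow> B t = 0"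
  unfolding B_def
proof (rule sum.neutral, rule ballI)
  fix s assume "om \<le> Re t" "s \<in> S"
  then have "\<not> (\<exists>i::nat. s = t + 2 + 2 * of_nat i)" using S_Cw[of s] by auto
  then show "(if \<exists>i::nat. s = t + 2 + 2 * of_nat i then m s else 0) = 0" by simp
qed

lemma G_van: "om - 3 < Re t \<Longrightarrow> G t = 0"
proof -
  assume a: "om - 3 < Re t"
  have "\<not> (\<exists>i::nat. r1 = t + 2 * of_nat i)" "\<not> (\<exists>i::nat. r2 = t + 2 * of_nat i)"
    using a r_Re by auto
  then show ?thesis unfolding G_def by simp
qed

lemma E_iter:
  assumes "b \<noteq> 0"
  shows "(act_e u ^^ n) b \<noteq> 0 \<and>
     val t ((act_e u ^^ n) b) = val (t - 2 * of_nat n) b + A t - A (t - 2 * of_nat n)"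
proof (induction n arbitrary: t)
  case 0
  then show ?case using assms by simp
next
  case (Suc n)
  have nz: "(act_e u ^^ n) b \<noteq> 0" using Suc.IH by blast
  have "val t ((act_e u ^^ Suc n) b) = val (t - 2) ((act_e u ^^ n) b) + m t"
    using nz by (simp add: val_act_e)
  also have "\<dots> = val (t - 2 - 2 * of_nat n) b + A (t - 2) - A (t - 2 - 2 * of_nat n) + m t"
    using Suc.IH[of "t - 2"] by simp
  also have "t - 2 - 2 * of_nat n = t - 2 * of_nat (Suc n)" by (simp add: algebra_simps)
  finally show ?case using nz act_e_nz A_rec[of t] by simp
qed

lemma F_iter:
  assumes "b \<noteq> 0"
  shows "(act_f th u ^^ n) b \<noteq> 0 \<and>
     val t ((act_f th u ^^ n) b) = val (t + 2 * of_nat n) b + G t - G (t + 2 * of_nat n)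
        - B t + B (t + 2 * of_nat n)"
proof (induction n arbitrary: t)
  case 0
  then show ?case using assms by simp
next
  case (Suc n)
  have nz: "(act_f th u ^^ n) b \<noteq> 0" using Suc.IH by blast
  have "val t ((act_f th u ^^ Suc n) b) = gam t + val (t + 2) ((act_f th u ^^ n) b) - m (t + 2)"
    using nz by (simp add: val_act_f)
  also have "\<dots> = gam t + (val (t + 2 + 2 * of_nat n) b + G (t + 2) - G (t + 2 + 2 * of_nat n)
        - B (t + 2) + B (t + 2 + 2 * of_nat n)) - m (t + 2)"
    using Suc.IH[of "t + 2"] by simp
  also have "t + 2 + 2 * of_nat n = t + 2 * of_nat (Suc n)" by (simp add: algebra_simps)
  finally show ?case using nz act_f_nz G_rec[of t] B_rec[of t] by simp
qed

lemma E_large: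
  assumes "b \<noteq> 0"
  shows "\<exists>n. (act_e u ^^ n) b \<noteq> 0 \<and> val t ((act_e u ^^ n) b) = A t"
proof -
  have inj: "inj (\<lambda>n::nat. t - 2 * of_nat n)" by (auto intro: injI)
  have f1: "finite ((\<lambda>n::nat. t - 2 * of_nat n) -` {t. val t b \<noteq> 0})"
    using finite_vimageI[OF finite_val inj] .
  have f2: "finite {n::nat. om \<le> Re t - 2 * real n}" by (rule fin_down)
  obtain n where n: "n \<notin> ((\<lambda>n::nat. t - 2 * of_nat n) -` {t. val t b \<noteq> 0}) \<union> {n::nat. om \<le> Re t - 2 * real n}"
    using nat_avoid[OF finite_UnI[OF f1 f2]] by blast
  then have "val (t - 2 * of_nat n) b = 0" "A (t - 2 * of_nat n) = 0"
    by (auto intro!: A_van)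
  then show ?thesis using E_iter[OF assms, of n t] by auto
qed

lemma F_large:
  assumes "b \<noteq> 0"
  shows "\<exists>n. (act_f th u ^^ n) b \<noteq> 0 \<and> val t ((act_f th u ^^ n) b) = G t - B t"
proof -
  have inj: "inj (\<lambda>n::nat. t + 2 * of_nat n)" by (auto intro: injI)
  have f1: "finite ((\<lambda>n::nat. t + 2 * of_nat n) -` {t. val t b \<noteq> 0})"
    using finite_vimageI[OF finite_val inj] .
  have f2: "finite {n::nat. Re t + 2 * real n < om}" by (rule fin_up)
  obtain n where n: "n \<notin> ((\<lambda>n::nat. t + 2 * of_nat n) -` {t. val t b \<noteq> 0}) \<union> {n::nat. Re t + 2 * real n < om}"
    using nat_avoid[OF finite_UnI[OF f1 f2]] by blast
  then have "val (t + 2 * of_nat n) b = 0" "G (t + 2 * of_nat n) = 0" "B (t + 2 * of_nat n) = 0"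
    by (auto intro!: G_van B_van)
  then show ?thesis using F_iter[OF assms, of n t] by auto
qed

end


context csetup
begin

lemma gam_nn: "0 \<le> gam t" by (simp add: gam_def)

lemma N_le0: "N t \<le> 0"
proof (cases "A t \<le> 0")
  case True then show ?thesis by (simp add: N_def)
next
  case False
  then have "A t \<noteq> 0" by simp
  then obtain s where s: "s \<in> S" "(if \<exists>i::nat. s = t - 2 * of_nat i then m s else 0) \<noteq> 0"
    unfolding A_def using sum.not_neutral_contains_not_neutral by blast
  then obtain i :: nat where "s = t - 2 * of_nat i" by (auto split: if_splits)
  then have "Re s \<le> Re t" by simp
  then have "om \<le> Re t" using S_Cw[OF s(1)] by simp
  then have "B t = 0" "G t = 0" by (auto intro!: B_van G_van)
  then show ?thesis by (simp add: N_def)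
qed

lemma one_L0: "1 \<in> L0"
  by (simp add: L0_def N_le0)

lemma L0_nz: "L0 \<noteq> {0}"
  using one_L0 by auto

lemma L0_submod: "is_submod th u L0"
  unfolding is_submod_def
proof (intro conjI ballI allI)
  show "0 \<in> L0" by (simp add: L0_def)
next
  fix a b assume a: "a \<in> L0" and b: "b \<in> L0"
  show "a + b \<in> L0"
  proof (cases "a = 0 \<or> b = 0 \<or> a + b = 0")
    case True then show ?thesis using a b by (auto simp: L0_def)
  next
    case False
    then have "N t \<le> val t (a + b)" for t
      using a b val_add[of a b t] by (auto simp: L0_def) (smt (verit) min_def)
    then show ?thesis by (simp add: L0_def)
  qed
next
  fix k a assume a: "a \<in> L0"
  show "cst k * a \<in> L0"
  proof (cases "k = 0 \<or> a = 0")
    case True then show ?thesis by (auto simp: L0_def)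
  next
    case False
    then show ?thesis using a by (auto simp: L0_def val_mult val_cst)
  qed
next
  fix a assume a: "a \<in> L0"
  have hv: "hvar = hvar - cst 0" by simp
  have hnz: "hvar \<noteq> 0" using hvar_minus_cst_nz[of 0] by simp
  have vh: "val t hvar \<ge> 0" for t using val_lin[of t 0] hv by (metis order.refl zero_less_one less_imp_le)
  show "act_h a \<in> L0"
  proof (cases "a = 0")
    case True then show ?thesis by (simp add: L0_def act_h_def)
  next
    case False
    then show ?thesis using a hnz vh unfolding act_h_def L0_def
      by (auto simp: val_mult) (smt (verit))
  qed
next
  fix a assume a: "a \<in> L0"
  show "act_e u a \<in> L0"
  proof (cases "a = 0")
    case True then show ?thesis by (simp add: L0_def act_e_def sigma_def shift_fr_zero)
  next
    case False
    have "N t \<le> val t (act_e u a)" for t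
    proof -
      have v: "val t (act_e u a) = val (t - 2) a + m t" using False by (simp add: val_act_e)
      have n: "N (t - 2) \<le> val (t - 2) a" using a False by (simp add: L0_def)
      have r1: "A t = m t + A (t - 2)" by (rule A_rec)
      have r2: "B (t - 2) = m t + B t" using B_rec[of "t - 2"] by simp
      have r3: "G (t - 2) = gam (t - 2) + G t" using G_rec[of "t - 2"] by simp
      show ?thesis using v n r1 r2 r3 gam_nn[of "t - 2"] unfolding N_def by linarith
    qed
    then show ?thesis by (simp add: L0_def)
  qed
next
  fix a assume a: "a \<in> L0"
  show "act_f th u a \<in> L0"
  proof (cases "a = 0")
    case True then show ?thesis by (simp add: L0_def act_f_def sigma_inv_def shift_fr_zero)
  next
    case False
    have "N t \<le> val t (act_f th u a)" for t
    proof -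
      have v: "val t (act_f th u a) = gam t + val (t + 2) a - m (t + 2)" using False by (simp add: val_act_f)
      have n: "N (t + 2) \<le> val (t + 2) a" using a False by (simp add: L0_def)
      have r1: "A (t + 2) = m (t + 2) + A t" using A_rec[of "t + 2"] by simp
      have r2: "B t = m (t + 2) + B (t + 2)" by (rule B_rec)
      have r3: "G t = gam t + G (t + 2)" by (rule G_rec)
      show ?thesis using v n r1 r2 r3 gam_nn[of t] unfolding N_def by linarith
    qed
    then show ?thesis by (simp add: L0_def)
  qed
qed

lemma submod_E: "is_submod th u M \<Longrightarrow> b \<in> M \<Longrightarrow> (act_e u ^^ n) b \<in> M"
  by (induction n) (auto simp: is_submod_def)

lemma submod_F: "is_submod th u M \<Longrightarrow> b \<in> M \<Longrightarrow> (act_f th u ^^ n) b \<in> M"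
  by (induction n) (auto simp: is_submod_def)

lemma L0_min:
  assumes M: "is_submod th u M" and nz: "M \<noteq> {0}"
  shows "L0 \<subseteq> M"
proof
  fix x assume x: "x \<in> L0"
  have z: "0 \<in> M" using M by (simp add: is_submod_def)
  obtain b where b: "b \<in> M" "b \<noteq> 0" using nz z by blast
  show "x \<in> M"
  proof (cases "x = 0")
    case True then show ?thesis using z by simp
  next
    case xnz: False
    have Nx: "N t \<le> val t x" for t using x xnz by (simp add: L0_def)
    define I where "I = {p. poly_fr p * x \<in> M}"
    have "1 \<in> I"
    proof (rule ideal_one)
      fix p q assume "p \<in> I" "q \<in> I"
      then have "poly_fr p * x + poly_fr q * x \<in> M" using M by (simp add: I_def is_submod_def)
      then show "p + q \<in> I" by (simp add: I_def poly_fr_add algebra_simps)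
    next
      fix p q assume "p \<in> I"
      then have "poly_fr q * (poly_fr p * x) \<in> M" using M submod_poly by (simp add: I_def)
      then show "q * p \<in> I" by (simp add: I_def poly_fr_mult mult.assoc)
    next
      fix t
      obtain y where y: "y \<in> M" "y \<noteq> 0" "val t y \<le> val t x"
      proof (cases "A t \<le> G t - B t")
        case True
        obtain n where n: "(act_e u ^^ n) b \<noteq> 0" "val t ((act_e u ^^ n) b) = A t"
          using E_large[OF b(2)] by blast
        show ?thesis using that[OF submod_E[OF M b(1)] n(1)] n(2) Nx[of t] True
          by (simp add: N_def)
      next
        case False
        obtain n where n: "(act_f th u ^^ n) b \<noteq> 0" "val t ((act_f th u ^^ n) b) = G t - B t"
          using F_large[OF b(2)] by blast
        show ?thesis using that[OF submod_F[OF M b(1)] n(1)] n(2) Nx[of t] False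
          by (simp add: N_def)
      qed
      obtain p k where pk: "poly_fr p * x = poly_fr k * y" "poly p t \<noteq> 0"
        using local_step[OF xnz y(2) y(3)] by blast
      have "poly_fr k * y \<in> M" using submod_poly[OF M y(1)] .
      then have "p \<in> I" using pk(1) by (simp add: I_def)
      then show "\<exists>p\<in>I. poly p t \<noteq> 0" using pk(2) by blast
    qed
    then show ?thesis by (simp add: I_def)
  qed
qed

lemma L_mod_eq: "L_mod th u = L0"
  unfolding L_mod_def
proof (rule the_equality)
  show "is_simple_submod th u L0"
    unfolding is_simple_submod_def using L0_submod L0_nz L0_min by blast
next
  fix M assume "is_simple_submod th u M"
  then have "is_submod th u M" "M \<noteq> {0}" "\<And>M'. is_submod th u M' \<and> M' \<subseteq> M \<Longrightarrow> M' = {0} \<or> M' = M"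
    unfolding is_simple_submod_def by blast+
  then show "M = L0" using L0_min L0_submod L0_nz by blast
qed

end


lemma inj_infinite: "inj (f :: nat \<Rightarrow> 'a) \<Longrightarrow> range f \<subseteq> X \<Longrightarrow> infinite X"
proof
  assume inj: "inj f" and sub: "range f \<subseteq> X" and fin: "finite X"
  have "finite (range f)" using fin sub by (rule finite_subset[rotated])
  then have "finite (UNIV :: nat set)" using inj by (rule finite_imageD)
  then show False by simp
qed

lemma commden:
  assumes "finite (T :: ratfun set)"
  shows "\<exists>D. D \<noteq> 0 \<and> (\<forall>s\<in>T. \<exists>q. s * poly_fr D = poly_fr q)"
  using assms
proof (induction T rule: finite_induct)
  case empty
  then show ?case by (intro exI[of _ 1]) simp
next
  case (insert x T)
  then obtain D where D: "D \<noteq> 0" "\<forall>s\<in>T. \<exists>q. s * poly_fr D = poly_fr q" by blast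
  obtain a b where ab: "x = Fract a b" "b \<noteq> 0" by (rule Fract_cases)
  have "x * poly_fr (D * b) = Fract (a * D * b) (1 * b)"
    using ab by (simp add: poly_fr_def mult.assoc)
  also have "\<dots> = poly_fr (a * D)"
    using ab(2) mult_fract_cancel[of b "a * D" 1] by (simp add: poly_fr_def mult.commute)
  finally have x1: "x * poly_fr (D * b) = poly_fr (a * D)" .
  have x2: "\<exists>q. s * poly_fr (D * b) = poly_fr q" if sT: "s \<in> T" for s
  proof -
    obtain q where q: "s * poly_fr D = poly_fr q" using bspec[OF D(2) sT] by (elim exE)
    have "s * poly_fr (D * b) = poly_fr q * poly_fr b" unfolding poly_fr_mult q[symmetric] by (rule mult.assoc[symmetric])
    then show ?thesis unfolding poly_fr_mult[symmetric] by (rule exI)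
  qed
  have x3: "D * b \<noteq> 0" using D(1) ab(2) by simp
  have "\<forall>s\<in>insert x T. \<exists>q. s * poly_fr (D * b) = poly_fr q"
  proof
    fix s assume "s \<in> insert x T"
    then show "\<exists>q. s * poly_fr (D * b) = poly_fr q"
    proof
      assume "s = x" then show ?thesis using x1 by blast
    next
      assume "s \<in> T" then show ?thesis using x2 by blast
    qed
  qed
  then show ?case using x3 by (intro exI[of _ "D * b"]) simp
qed

context csetup
begin

definition "Kr r s = (if \<exists>n::nat. n > 0 \<and> r = s - 2 * of_nat n then 1 else (0::int))"

definition "Cond \<longleftrightarrow> (\<forall>s\<in>Cw. 0 \<le> m s \<and>
            m s \<le> int (card {j \<in> {1::nat, 2}.
                       \<exists>n::nat. n > 0 \<and> (if j = 1 then r1 else r2) = s - 2 * of_nat n}))"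

lemma card_Kr: "int (card {j \<in> {1::nat, 2}. \<exists>n::nat. n > 0 \<and> (if j = 1 then r1 else r2) = s - 2 * of_nat n})
   = Kr r1 s + Kr r2 s"
  by (subst card12) (simp add: Kr_def)

lemma root_shift:
  assumes s: "s \<in> Cw" and t: "t = s - 2 - 2 * of_nat i" and le: "Re t \<le> Re r" and r: "Re r \<le> om - 3"
  shows "(\<exists>i'::nat. r = t + 2 * of_nat i') \<longleftrightarrow> (\<exists>n::nat. n > 0 \<and> r = s - 2 * of_nat n)"
proof -
  have sr: "om \<le> Re s" "Re s < om + 2" using s Cw_def by auto
  show ?thesis
  proof
    assume "\<exists>i'::nat. r = t + 2 * of_nat i'"
    then obtain i' :: nat where i': "r = t + 2 * of_nat i'" by blast
    have "Re r = Re s - 2 - 2 * real i + 2 * real i'" using i' t by simp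
    then have "i' \<le> i" using r sr by linarith
    then have "r = s - 2 * of_nat (Suc i - i')" using i' t by (simp add: of_nat_diff algebra_simps)
    moreover have "Suc i - i' > 0" using \<open>i' \<le> i\<close> by simp
    ultimately show "\<exists>n::nat. n > 0 \<and> r = s - 2 * of_nat n" by blast
  next
    assume "\<exists>n::nat. n > 0 \<and> r = s - 2 * of_nat n"
    then obtain n :: nat where n: "n > 0" "r = s - 2 * of_nat n" by blast
    have "Re r = Re s - 2 * real n" using n by simp
    moreover have "Re t = Re s - 2 - 2 * real i" using t by simp
    ultimately have "n \<le> Suc i" using le by linarith
    then have "r = t + 2 * of_nat (Suc i - n)" using n t by (simp add: of_nat_diff algebra_simps)
    then show "\<exists>i'::nat. r = t + 2 * of_nat i'" by blast
  qed
qed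

lemma G_Kr:
  assumes s: "s \<in> Cw" and t: "t = s - 2 - 2 * of_nat i" and "Re t \<le> Re r1" "Re t \<le> Re r2"
  shows "G t = Kr r1 s + Kr r2 s"
  using root_shift[OF s t assms(3) r_Re(1)] root_shift[OF s t assms(4) r_Re(2)]
  unfolding G_def Kr_def by simp

lemma sum_single:
  assumes "s \<in> S" "\<And>s'. s' \<in> S \<Longrightarrow> P s' \<longleftrightarrow> s' = s"
  shows "(\<Sum>s'\<in>S. if P s' then m s' else 0) = m s"
proof -
  have "(\<Sum>s'\<in>S. if P s' then m s' else 0) = (\<Sum>s'\<in>S. if s' = s then m s' else 0)"
    by (rule sum.cong) (use assms in auto)
  also have "\<dots> = m s" using assms finS by (simp add: sum.delta)
  finally show ?thesis .
qed

lemma SCw: "s \<in> S \<Longrightarrow> s \<in> Cw" using m_supp S_def by auto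

lemma B_single:
  assumes s: "s \<in> S" and t: "t = s - 2 - 2 * of_nat i"
  shows "B t = m s"
  unfolding B_def
proof (rule sum_single[OF s])
  fix s' assume s': "s' \<in> S"
  show "(\<exists>k::nat. s' = t + 2 + 2 * of_nat k) \<longleftrightarrow> s' = s"
  proof
    assume "\<exists>k::nat. s' = t + 2 + 2 * of_nat k"
    then obtain k :: nat where "s' = t + 2 + 2 * of_nat k" by blast
    then have "s' + 2 * of_nat i = s + 2 * of_nat k" using t by (simp add: algebra_simps)
    then show "s' = s" using geo[OF SCw[OF s'] SCw[OF s]] by blast
  next
    assume "s' = s"
    then show "\<exists>k::nat. s' = t + 2 + 2 * of_nat k" using t by (intro exI[of _ i]) simp
  qed
qed

lemma A_single:
  assumes s: "s \<in> S" and t: "t = s + 2 * of_nat i"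
  shows "A t = m s"
  unfolding A_def
proof (rule sum_single[OF s])
  fix s' assume s': "s' \<in> S"
  show "(\<exists>k::nat. s' = t - 2 * of_nat k) \<longleftrightarrow> s' = s"
  proof
    assume "\<exists>k::nat. s' = t - 2 * of_nat k"
    then obtain k :: nat where "s' = t - 2 * of_nat k" by blast
    then have "s' + 2 * of_nat k = s + 2 * of_nat i" using t by (simp add: algebra_simps)
    then show "s' = s" using geo[OF SCw[OF s'] SCw[OF s]] by blast
  next
    assume "s' = s"
    then show "\<exists>k::nat. s' = t - 2 * of_nat k" using t by (intro exI[of _ i]) simp
  qed
qed

lemma G_nn: "0 \<le> G t" by (simp add: G_def)

lemma inv_L0:
  assumes "N t < 0"
  shows "inverse (hvar - cst t) \<in> L0"
proof -
  have "N t' \<le> val t' (inverse (hvar - cst t))" for t'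
    using assms N_le0[of t'] hvar_minus_cst_nz[of t] by (simp add: val_inverse val_lin)
  then show ?thesis by (simp add: L0_def)
qed

lemma fg_finite_neg:
  assumes "fin_gen_Ch L0"
  shows "finite {t. N t < 0}"
proof -
  obtain T where T: "finite T" "T \<subseteq> L0" "L0 = {\<Sum>s\<in>T. poly_fr (p s) * s | p. True}"
    using assms unfolding fin_gen_Ch_def by blast
  obtain D where D: "D \<noteq> 0" "\<forall>s\<in>T. \<exists>q. s * poly_fr D = poly_fr q" using commden[OF T(1)] by blast
  then obtain qf where qf: "\<forall>s\<in>T. s * poly_fr D = poly_fr (qf s)" by metis
  have pol: "\<exists>q. x * poly_fr D = poly_fr q" if xL: "x \<in> L0" for x
  proof -
    obtain p where x: "x = (\<Sum>s\<in>T. poly_fr (p s) * s)" using xL T(3) by blast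
    have "x * poly_fr D = (\<Sum>s\<in>T. poly_fr (p s) * (s * poly_fr D))"
      by (simp add: x sum_distrib_right mult.assoc)
    also have "\<dots> = (\<Sum>s\<in>T. poly_fr (p s * qf s))"
      by (rule sum.cong) (simp_all add: qf poly_fr_mult)
    also have "\<dots> = poly_fr (\<Sum>s\<in>T. p s * qf s)" by (simp add: poly_fr_sum)
    finally show ?thesis by blast
  qed
  have "{t. N t < 0} \<subseteq> {t. poly D t = 0}"
  proof
    fix t assume "t \<in> {t. N t < 0}"
    then have xin: "inverse (hvar - cst t) \<in> L0" using inv_L0 by simp
    define x where "x = inverse (hvar - cst t)"
    have xnz: "x \<noteq> 0" using hvar_minus_cst_nz[of t] by (simp add: x_def)
    obtain q where q: "x * poly_fr D = poly_fr q" using pol xin x_def by blast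
    have qnz: "q \<noteq> 0" using q xnz D(1) by (metis mult_eq_0_iff poly_fr_eq_0)
    have "val t (x * poly_fr D) = -1 + int (order t D)"
      using xnz D(1) hvar_minus_cst_nz[of t] by (simp add: val_mult val_poly_fr x_def val_inverse val_lin)
    then have "-1 + int (order t D) = int (order t q)" using q qnz by (simp add: val_poly_fr)
    then have "order t D \<noteq> 0" by linarith
    then show "t \<in> {t. poly D t = 0}" using D(1) by (simp add: order_root)
  qed
  then show ?thesis using poly_roots_finite[OF D(1)] finite_subset by blast
qed

lemma notCond_infinite:
  assumes "\<not> Cond"
  shows "infinite {t. N t < 0}"
proof -
  obtain s where s: "s \<in> Cw" "m s < 0 \<or> m s > Kr r1 s + Kr r2 s"
    using assms unfolding Cond_def card_Kr by (auto simp: not_le)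
  have sS: "s \<in> S" using s(2) by (auto simp: S_def Kr_def split: if_splits)
  show ?thesis
  proof (cases "m s < 0")
    case True
    have "range (\<lambda>i::nat. s + 2 * of_nat i) \<subseteq> {t. N t < 0}"
    proof
      fix t assume "t \<in> range (\<lambda>i::nat. s + 2 * of_nat i)"
      then obtain i :: nat where t: "t = s + 2 * of_nat i" by blast
      have "N t \<le> A t" by (simp add: N_def)
      then show "t \<in> {t. N t < 0}" using A_single[OF sS t] True by simp
    qed
    moreover have "inj (\<lambda>i::nat. s + 2 * of_nat i)" by (auto intro: injI)
    ultimately show ?thesis using inj_infinite by blast
  next
    case False
    then have big: "m s > Kr r1 s + Kr r2 s" using s by simp
    define rho where "rho = min (Re r1) (Re r2)"
    define i0 where "i0 = nat \<lceil>om - rho\<rceil>"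
    have sr: "om \<le> Re s" "Re s < om + 2" using s Cw_def by auto
    have "range (\<lambda>i::nat. s - 2 - 2 * of_nat (i0 + i)) \<subseteq> {t. N t < 0}"
    proof
      fix t assume "t \<in> range (\<lambda>i::nat. s - 2 - 2 * of_nat (i0 + i))"
      then obtain i :: nat where t: "t = s - 2 - 2 * of_nat (i0 + i)" by blast
      have "om - rho \<le> real i0" unfolding i0_def by linarith
      moreover have "om - rho \<ge> 3" using r_Re rho_def by auto
      moreover have "Re t = Re s - 2 - 2 * real (i0 + i)" using t by simp
      ultimately have "Re t \<le> rho" using sr by simp
      then have "Re t \<le> Re r1" "Re t \<le> Re r2" unfolding rho_def by auto
      then have "G t = Kr r1 s + Kr r2 s" using G_Kr[OF s(1) t] by blast
      moreover have "B t = m s" using B_single[OF sS t] .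
      moreover have "N t \<le> G t - B t" by (simp add: N_def)
      ultimately show "t \<in> {t. N t < 0}" using big by simp
    qed
    moreover have "inj (\<lambda>i::nat. s - 2 - 2 * of_nat (i0 + i))" by (auto intro: injI)
    ultimately show ?thesis using inj_infinite by blast
  qed
qed

lemma fg_imp_Cond: "fin_gen_Ch L0 \<Longrightarrow> Cond"
  using fg_finite_neg notCond_infinite by blast

end


context csetup
begin

lemma A_nn: "Cond \<Longrightarrow> 0 \<le> A t"
  unfolding A_def
proof (rule sum_nonneg)
  fix s assume C: Cond and s: "s \<in> S"
  then have "0 \<le> m s" using SCw[OF s] unfolding Cond_def by blast
  then show "0 \<le> (if \<exists>i::nat. s = t - 2 * of_nat i then m s else 0)" by simp
qed

lemma Cond_support:
  assumes C: Cond and Nt: "N t \<noteq> 0"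
  shows "t \<in> (\<lambda>(s, i). s - 2 - 2 * of_nat i) ` (S \<times> {..nat \<lceil>om - min (Re r1) (Re r2)\<rceil>})"
proof -
  define rho where "rho = min (Re r1) (Re r2)"
  have "N t < 0" using Nt N_le0[of t] by simp
  then have "G t - B t < 0" using A_nn[OF C, of t] unfolding N_def by linarith
  then have "B t \<noteq> 0" using G_nn[of t] by linarith
  then obtain s where s: "s \<in> S" "(if \<exists>i::nat. s = t + 2 + 2 * of_nat i then m s else 0) \<noteq> 0"
    unfolding B_def using sum.not_neutral_contains_not_neutral by blast
  then obtain i :: nat where i: "s = t + 2 + 2 * of_nat i" by (auto split: if_splits)
  then have t: "t = s - 2 - 2 * of_nat i" by simp
  have Bt: "B t = m s" using B_single[OF s(1) t] .
  have mle: "m s \<le> Kr r1 s + Kr r2 s" using C SCw[OF s(1)] unfolding Cond_def card_Kr by blast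
  have "\<not> (Re t \<le> Re r1 \<and> Re t \<le> Re r2)"
  proof
    assume "Re t \<le> Re r1 \<and> Re t \<le> Re r2"
    then have "G t = Kr r1 s + Kr r2 s" using G_Kr[OF SCw[OF s(1)] t] by blast
    then show False using \<open>G t - B t < 0\<close> Bt mle by simp
  qed
  then have "rho < Re t" unfolding rho_def by auto
  moreover have "Re t = Re s - 2 - 2 * real i" using t by simp
  moreover have "Re s < om + 2" using S_Cw[OF s(1)] by simp
  ultimately have "real i \<le> om - rho" by linarith
  then have "i \<le> nat \<lceil>om - rho\<rceil>" by (rule nat_le_ceil)
  then show ?thesis using s(1) t unfolding rho_def by force
qed

lemma Cond_fin: "Cond \<Longrightarrow> finite {t. N t \<noteq> 0}"
proof -
  assume C: Cond
  have "{t. N t \<noteq> 0} \<subseteq> (\<lambda>(s, i). s - 2 - 2 * of_nat i) ` (S \<times> {..nat \<lceil>om - min (Re r1) (Re r2)\<rceil>})"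
    using Cond_support[OF C] by blast
  moreover have "finite ((\<lambda>(s, i). s - 2 - 2 * of_nat i) ` (S \<times> {..nat \<lceil>om - min (Re r1) (Re r2)\<rceil>}))"
    using finS by simp
  ultimately show ?thesis using finite_subset by blast
qed

lemma Cond_fg: "Cond \<Longrightarrow> fin_gen_Ch L0"
proof -
  assume C: Cond
  define F where "F = {t. N t \<noteq> 0}"
  have finF: "finite F" using Cond_fin[OF C] by (simp add: F_def)
  define w where "w = (\<Prod>t\<in>F. (hvar - cst t) powi N t)"
  have wnz: "w \<noteq> 0" unfolding w_def using finF hvar_minus_cst_nz by (simp add: power_int_eq_0_iff)
  have vw: "val t w = N t" for t
  proof -
    have "val t w = (\<Sum>s\<in>F. N s * (if t = s then 1 else 0))"
      unfolding w_def using finF hvar_minus_cst_nz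
      by (simp add: val_prod val_powi val_lin power_int_eq_0_iff)
    also have "\<dots> = (\<Sum>s\<in>F. if s = t then N s else 0)" by (rule sum.cong) auto
    also have "\<dots> = N t" using finF by (simp add: sum.delta F_def)
    finally show ?thesis .
  qed
  have wL: "w \<in> L0" using vw by (simp add: L0_def)
  have eq: "L0 = {\<Sum>s\<in>{w}. poly_fr (p s) * s | p. True}"
  proof
    show "L0 \<subseteq> {\<Sum>s\<in>{w}. poly_fr (p s) * s | p. True}"
    proof
      fix x assume x: "x \<in> L0"
      show "x \<in> {\<Sum>s\<in>{w}. poly_fr (p s) * s | p. True}"
      proof (cases "x = 0")
        case True
        then show ?thesis by (auto intro!: exI[of _ "\<lambda>_. 0"])
      next
        case False
        have "0 \<le> val t (x / w)" for t using False wnz x vw[of t] by (simp add: val_divide L0_def)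
        then obtain q where q: "x / w = poly_fr q" using poly_crit False wnz by (metis divide_eq_0_iff)
        then have "x = poly_fr q * w" using wnz by (simp add: field_simps)
        then show ?thesis by (auto intro!: exI[of _ "\<lambda>_. q"])
      qed
    qed
  next
    show "{\<Sum>s\<in>{w}. poly_fr (p s) * s | p. True} \<subseteq> L0"
    proof
      fix x assume "x \<in> {\<Sum>s\<in>{w}. poly_fr (p s) * s | p. True}"
      then obtain p where x: "x = poly_fr (p w) * w" by auto
      show "x \<in> L0"
      proof (cases "p w = 0")
        case True then show ?thesis using x by (simp add: L0_def)
      next
        case False
        then show ?thesis using x wnz vw by (simp add: L0_def val_mult val_poly_fr)
      qed
    qed
  qed
  show ?thesis unfolding fin_gen_Ch_def using eq wL by (intro exI[of _ "{w}"]) auto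
qed

lemma main: "fin_gen_Ch (L_mod th u) \<longleftrightarrow> Cond"
  using L_mod_eq Cond_fg fg_imp_Cond by auto

end

theorem corollary13:
  fixes \<theta> r1 r2 c :: complex and m :: "complex \<Rightarrow> int" and \<omega> :: real and C\<omega> :: "complex set"
  assumes roots: "\<And>z. \<theta> - (z + 1)^2 = - ((z - r1) * (z - r2))"
    and \<omega>_def: "\<omega> = 3 + max (Re r1) (Re r2)"
    and C\<omega>_def: "C\<omega> = {z. \<omega> \<le> Re z \<and> Re z < \<omega> + 2}"
    and c_nz: "c \<noteq> 0"
    and m_fin: "finite {t. m t \<noteq> 0}"
    and m_supp: "{t. m t \<noteq> 0} \<subseteq> C\<omega>"
  shows "fin_gen_Ch (L_mod \<theta> (cst c * (\<Prod>t\<in>{t. m t \<noteq> 0}. (hvar - cst t) powi m t)))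
     \<longleftrightarrow> (\<forall>s\<in>C\<omega>. 0 \<le> m s \<and>
            m s \<le> int (card {j \<in> {1::nat, 2}.
                       \<exists>n::nat. n > 0 \<and> (if j = 1 then r1 else r2) = s - 2 * of_nat n}))"
proof -
  interpret csetup \<theta> r1 r2 c m \<omega> C\<omega>
    using assms by unfold_locales auto
  show ?thesis using main unfolding u_def S_def Cond_def .
qed


end
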